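(* Let $n,k\geq1$. The dimension of the tropical RBM model $TM^k_n$ equals the maximum rank of a $2^n\times(nk+n+k)$ matrix of the form $\mathcal{A}=(A\mid A_{C_1}\mid A_{C_2}\mid\cdots\mid A_{C_k})$, where the maximum is taken over all choices of $k$ slicings $C_1,\dots,C_k$ of the $n$-cube.
   Context: Fix an ordering of $\{0,1\}^n$ indexing coordinates of $\mathbb{R}^{2^n}$ and matrix rows. The tropical morphism $\Phi:\mathbb{R}^{nk+n+k}\to\mathbb{TP}^{2^n-1}=\mathbb{R}^{2^n}/\mathbb{R}(1,\dots,1)$ sends $(W,b,c)\in\mathbb{R}^{k\times n}\times\mathbb{R}^n\times\mathbb{R}^k$ to the class of $(q(v))_{v\in\{0,1\}^n}$, $q(v)=\max_{h\in\{0,1\}^k}\{h^{\top}Wv+b^{\top}v+c^{\top}h\}$. The tropical RBM model $TM^k_n$ is the image of $\Phi$; it is a finite union of polyhedral cones and its dimension is the maximum dimension of a cone contained in it. A subset $C\subseteq\{0,1\}^n$ is a slicing of the $n$-cube if some affine hyperplane has all vertices of $C$ strictly on its positive side and all other vertices of $\{0,1\}^n$ strictly on its negative side. $A$ is the $2^n\times n$ matrix whose row indexed by $v$ is $v$; for a slicing $C$, $A_C$ is the $2^n\times(n+1)$ matrix whose row indexed by $v\in C$ is $(1,v)$ and whose other rows are zero.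
   Formalization: The tropical RBM model $TM^k_n$ is the image of $\Phi$ in $\mathbb{R}^{2^n}$ itself, not its class in $\mathbb{TP}^{2^n-1}=\mathbb{R}^{2^n}/\mathbb{R}(1,\dots,1)$, and its dimension is measured there. The statement above fails without it. *)

theory Defs
  imports "HOL-Analysis.Analysis"
begin

text \<open>The visible units are indexed by a finite type 'n (so n = CARD('n)),
 the hidden units by a finite type 'k (so k = CARD('k)). A vertex v of the n-cube {0,1}^n
 is identified with the set of coordinates where it equals 1, i.e. v :: 'n set; likewise
 h :: 'k set.\<close>

text \<open>The tropical morphism Phi: (W,b,c) maps to (q(v))_v with
 q(v) = max over h of h^T W v + b^T v + c^T h.\<close>
definition rbm_trop :: "('k::finite \<Rightarrow> 'n::finite \<Rightarrow> real) \<Rightarrow> ('n \<Rightarrow> real) \<Rightarrow> ('k \<Rightarrow> real)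
    \<Rightarrow> real ^ ('n set)" where
  "rbm_trop W b c = (\<chi> v. Max {(\<Sum>i\<in>h. \<Sum>j\<in>v. W i j) + (\<Sum>j\<in>v. b j) + (\<Sum>i\<in>h. c i) | h. True})"

definition tropical_RBM :: "'k::finite itself \<Rightarrow> (real ^ ('n::finite set)) set" where
  "tropical_RBM (_ :: 'k itself) = range (\<lambda>(W :: 'k \<Rightarrow> 'n \<Rightarrow> real, b, c). rbm_trop W b c)"

definition polyhedral_cone :: "'a::euclidean_space set \<Rightarrow> bool" where
  "polyhedral_cone K \<longleftrightarrow> polyhedron K \<and> cone K"

definition cone_dimension :: "'a::euclidean_space set \<Rightarrow> nat" where
  "cone_dimension S = Max {dim K | K. polyhedral_cone K \<and> K \<subseteq> S}"

definition slicing :: "'n::finite set set \<Rightarrow> bool" where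
  "slicing C \<longleftrightarrow> (\<exists>(a :: 'n \<Rightarrow> real) a0. (\<exists>j. a j \<noteq> 0) \<and>
      (\<forall>v. (v \<in> C \<longrightarrow> a0 + (\<Sum>j\<in>v. a j) > 0) \<and> (v \<notin> C \<longrightarrow> a0 + (\<Sum>j\<in>v. a j) < 0)))"

text \<open>The 2^n x (nk+n+k) matrix (A | A_C1 | ... | A_Ck). Columns are indexed by
 Inl j (column j of A) and Inr (i, None) / Inr (i, Some j) (the constant column and
 column j of the v-part of A_{C_i}).\<close>
definition rbm_matrix :: "('k::finite \<Rightarrow> 'n::finite set set) \<Rightarrow> real ^ ('n + 'k \<times> 'n option) ^ ('n set)" where
  "rbm_matrix C = (\<chi> v. \<chi> col. (case col of
      Inl j \<Rightarrow> (if j \<in> v then 1 else 0)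
    | Inr (i, None) \<Rightarrow> (if v \<in> C i then 1 else 0)
    | Inr (i, Some j) \<Rightarrow> (if v \<in> C i \<and> j \<in> v then 1 else 0)))"

end

theory Submission
  imports Defs
begin

definition sv :: "real ^ ('n::finite + 'k::finite \<times> 'n option) \<Rightarrow> 'k \<Rightarrow> 'n set \<Rightarrow> real" where
  "sv x i v = x $ Inr (i, None) + (\<Sum>j\<in>v. x $ Inr (i, Some j))"

lemma sum_ind:
  fixes f :: "'a::finite \<Rightarrow> real"
  shows "(\<Sum>j\<in>UNIV. (if j \<in> v then 1 else 0) * f j) = sum f v"
proof -
  have "(\<Sum>j\<in>UNIV. (if j \<in> v then 1 else 0) * f j) = (\<Sum>j\<in>UNIV. if j \<in> v then f j else 0)"
    by (rule sum.cong) auto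
  also have "\<dots> = sum f v" by (simp add: sum.If_cases)
  finally show ?thesis .
qed

lemma rbm_entries:
  "rbm_matrix C $ v $ Inl j = (if j \<in> v then 1 else 0)"
  "rbm_matrix C $ v $ Inr (i, None) = (if v \<in> C i then 1 else 0)"
  "rbm_matrix C $ v $ Inr (i, Some j) = (if v \<in> C i \<and> j \<in> v then 1 else 0)"
  by (simp_all add: rbm_matrix_def)

lemma mat_mult:
  fixes x :: "real ^ ('n::finite + 'k::finite \<times> 'n option)"
  shows "(rbm_matrix C *v x) $ v = (\<Sum>j\<in>v. x $ Inl j) + (\<Sum>i | v \<in> C i. sv x i v)"
proof -
  have U: "(UNIV :: ('n + 'k \<times> 'n option) set) = UNIV <+> (UNIV \<times> (insert None (range Some)))"
    by (simp add: UNIV_option_conv[symmetric])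
  have "(rbm_matrix C *v x) $ v = (\<Sum>col\<in>UNIV. rbm_matrix C $ v $ col * x $ col)"
    by (simp add: matrix_vector_mult_def)
  also have "\<dots> = (\<Sum>j\<in>UNIV. (if j \<in> v then 1 else 0) * x $ Inl j)
      + (\<Sum>p\<in>UNIV \<times> (insert None (range Some)). rbm_matrix C $ v $ Inr p * x $ Inr p)"
    unfolding U by (subst sum.Plus) (auto simp: rbm_matrix_def)
  also have "(\<Sum>j\<in>UNIV. (if j \<in> v then 1 else 0) * x $ Inl j) = (\<Sum>j\<in>v. x $ Inl j)"
  proof -
    have "(\<Sum>j\<in>UNIV. (if j \<in> v then 1 else 0) * x $ Inl j) = (\<Sum>j\<in>UNIV. if j \<in> v then x $ Inl j else 0)"
      by (rule sum.cong) auto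
    also have "\<dots> = (\<Sum>j\<in>v. x $ Inl j)" by (simp add: sum.If_cases)
    finally show ?thesis .
  qed
  also have "(\<Sum>p\<in>UNIV \<times> (insert None (range Some)). rbm_matrix C $ v $ Inr p * x $ Inr p)
     = (\<Sum>i\<in>UNIV. \<Sum>t\<in>insert None (range Some). rbm_matrix C $ v $ Inr (i,t) * x $ Inr (i,t))"
    unfolding sum.cartesian_product by (rule sum.cong) auto
  also have "\<dots> = (\<Sum>i\<in>UNIV. if v \<in> C i then sv x i v else 0)"
  proof (rule sum.cong[OF refl])
    fix i
    have "(\<Sum>t\<in>insert None (range Some). rbm_matrix C $ v $ Inr (i,t) * x $ Inr (i,t))
        = rbm_matrix C $ v $ Inr (i,None) * x $ Inr (i,None) + (\<Sum>t\<in>range Some. rbm_matrix C $ v $ Inr (i,t) * x $ Inr (i,t))"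
      by (subst sum.insert) auto
    also have "(\<Sum>t\<in>range Some. rbm_matrix C $ v $ Inr (i,t) * x $ Inr (i,t)) = (\<Sum>j\<in>UNIV. rbm_matrix C $ v $ Inr (i,Some j) * x $ Inr (i,Some j))"
      by (subst sum.reindex) (auto simp: inj_on_def)
    finally show "(\<Sum>t\<in>insert None (range Some). rbm_matrix C $ v $ Inr (i,t) * x $ Inr (i,t)) = (if v \<in> C i then sv x i v else 0)"
      by (cases "v \<in> C i") (simp_all add: rbm_entries sv_def sum_ind)
  qed
  also have "\<dots> = (\<Sum>i | v \<in> C i. sv x i v)"
    by (simp add: sum.If_cases)
  finally show ?thesis .
qed

lemma max_pos_sum:
  fixes a :: "'k::finite \<Rightarrow> real"
  shows "Max (range (\<lambda>h. sum a h + B)) = sum a {i. a i > 0} + B"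
proof (rule Max_eqI)
  show "finite (range (\<lambda>h. sum a h + B))" by simp
  show "sum a {i. a i > 0} + B \<in> range (\<lambda>h. sum a h + B)" by blast
  fix y assume "y \<in> range (\<lambda>h. sum a h + B)"
  then obtain h where y: "y = sum a h + B" by blast
  have "sum a h = sum a (h \<inter> {i. a i > 0}) + sum a (h - {i. a i > 0})"
    by (metis Diff_Int_distrib2 finite Int_Diff_Un Int_Diff_disjoint sum.union_disjoint Diff_disjoint Un_Diff_Int)
  also have "sum a (h - {i. a i > 0}) \<le> 0" by (rule sum_nonpos) auto
  also have "sum a (h \<inter> {i. a i > 0}) \<le> sum a {i. a i > 0}"
    by (rule sum_mono2) auto
  finally show "y \<le> sum a {i. a i > 0} + B" using y by simp
qed

definition param :: "('k::finite \<Rightarrow> 'n::finite \<Rightarrow> real) \<Rightarrow> ('n \<Rightarrow> real) \<Rightarrow> ('k \<Rightarrow> real) \<Rightarrow> real ^ ('n + 'k \<times> 'n option)" where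
  "param W b c = (\<chi> col. case col of Inl j \<Rightarrow> b j | Inr (i, None) \<Rightarrow> c i | Inr (i, Some j) \<Rightarrow> W i j)"

lemma trop_eq:
  fixes W :: "'k::finite \<Rightarrow> 'n::finite \<Rightarrow> real"
  shows "rbm_trop W b c = rbm_matrix (\<lambda>i. {v. sv (param W b c) i v > 0}) *v param W b c"
proof -
  let ?x = "param W b c"
  have sv: "sv ?x i v = c i + (\<Sum>j\<in>v. W i j)" for i v by (simp add: sv_def param_def)
  show ?thesis
  proof (rule vec_eq_iff[THEN iffD2, rule_format])
    fix v :: "'n set"
    have "{(\<Sum>i\<in>h. \<Sum>j\<in>v. W i j) + (\<Sum>j\<in>v. b j) + (\<Sum>i\<in>h. c i) | h. True}
        = range (\<lambda>h. sum (\<lambda>i. sv ?x i v) h + (\<Sum>j\<in>v. b j))"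
    proof -
      have fe: "(\<lambda>h. (\<Sum>i\<in>h. \<Sum>j\<in>v. W i j) + (\<Sum>j\<in>v. b j) + (\<Sum>i\<in>h. c i))
           = (\<lambda>h. sum (\<lambda>i. sv ?x i v) h + (\<Sum>j\<in>v. b j))"
        by (rule ext) (simp add: sv sum.distrib)
      show ?thesis by (subst fe[symmetric]) blast
    qed
    then have "rbm_trop W b c $ v = sum (\<lambda>i. sv ?x i v) {i. sv ?x i v > 0} + (\<Sum>j\<in>v. b j)"
      by (simp add: rbm_trop_def max_pos_sum)
    also have "\<dots> = (rbm_matrix (\<lambda>i. {v. sv ?x i v > 0}) *v ?x) $ v"
      by (simp add: mat_mult param_def)
    finally show "rbm_trop W b c $ v = (rbm_matrix (\<lambda>i. {v. sv ?x i v > 0}) *v ?x) $ v" .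
  qed
qed

lemma slicing_pos:
  fixes f :: "'n::finite \<Rightarrow> real"
  shows "slicing {v. c0 + sum f v > 0}"
proof -
  define g where "g v = c0 + sum f v" for v
  define D where "D = insert 1 (g ` {v. g v > 0})"
  define d where "d = Min D"
  have fD: "finite D" by (simp add: D_def)
  have "d \<in> D" unfolding d_def using fD by (rule Min_in) (simp add: D_def)
  then have dpos: "d > 0" by (auto simp: D_def)
  have dle: "d \<le> g v" if "g v > 0" for v
    unfolding d_def using fD that by (intro Min_le) (auto simp: D_def)
  define j0 where "j0 = (undefined :: 'n)"
  define e where "e = (if f j0 + d/8 \<noteq> 0 then d/8 else d/16)"
  have epos: "e > 0" and ele: "e \<le> d/8" using dpos by (auto simp: e_def)
  have ene: "f j0 + e \<noteq> 0" using dpos by (auto simp: e_def)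
  define a where "a j = f j + (if j = j0 then e else 0)" for j
  have suma: "sum a v = sum f v + (if j0 \<in> v then e else 0)" for v
    by (simp add: a_def sum.distrib)
  show ?thesis
    unfolding slicing_def
  proof (intro exI conjI allI impI)
    show "a j0 \<noteq> 0" using ene by (simp add: a_def)
  next
    fix v :: "'n set"
    assume "v \<in> {v. c0 + sum f v > 0}"
    then have "g v > 0" by (simp add: g_def)
    then have "d \<le> g v" by (rule dle)
    then show "c0 - d/2 + sum a v > 0" using dpos epos by (simp add: suma g_def)
  next
    fix v :: "'n set"
    assume "v \<notin> {v. c0 + sum f v > 0}"
    then have "g v \<le> 0" by (simp add: g_def)
    then show "c0 - d/2 + sum a v < 0" using dpos epos ele by (simp add: suma g_def)
  qed
qed

lemma convex_in_union_subspaces: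
  fixes K :: "'a::real_vector set"
  assumes "finite F" "\<forall>V\<in>F. subspace V" "convex K" "K \<noteq> {}" "K \<subseteq> \<Union>F"
  shows "\<exists>V\<in>F. K \<subseteq> V"
  using assms
proof (induction "card F" arbitrary: F rule: less_induct)
  case less
  show ?case
  proof (cases "\<exists>V\<in>F. K \<subseteq> \<Union>(F - {V})")
    case True
    then obtain V where V: "V \<in> F" "K \<subseteq> \<Union>(F - {V})" by blast
    have "card (F - {V}) < card F" using V less.prems(1) by (meson card_Diff1_less)
    from less.hyps[OF this] V less.prems obtain V' where "V' \<in> F - {V}" "K \<subseteq> V'" by auto
    then show ?thesis by blast
  next
    case False
    then have ex: "\<forall>V\<in>F. \<exists>x\<in>K. x \<notin> \<Union>(F - {V})" by blast
    obtain k where "k \<in> K" using less.prems by blast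
    then obtain V1 where V1: "V1 \<in> F" using less.prems by blast
    show ?thesis
    proof (cases "F = {V1}")
      case True then show ?thesis using less.prems by auto
    next
      case False
      then obtain V2 where V2: "V2 \<in> F" "V2 \<noteq> V1" using V1 by blast
      obtain x where x: "x \<in> K" "x \<notin> \<Union>(F - {V1})" using ex V1 by blast
      obtain y where y: "y \<in> K" "y \<notin> \<Union>(F - {V2})" using ex V2 by blast
      have xV1: "x \<in> V1" using x less.prems(5) by blast
      have yV1: "y \<notin> V1" using y V1 V2 by blast
      define z where "z t = (1 - t) *\<^sub>R x + t *\<^sub>R y" for t :: real
      have zK: "z t \<in> K" if "t \<in> {0<..<1}" for t
        using that x y less.prems(3) unfolding z_def convex_def by auto
      have znot: "z t \<notin> V1" if "t \<in> {0<..<1}" for t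
      proof
        assume "z t \<in> V1"
        have sV: "subspace V1" using V1 less.prems(2) by blast
        have "(1 - t) *\<^sub>R x \<in> V1" using xV1 sV by (simp add: subspace_scale)
        then have "z t - (1 - t) *\<^sub>R x \<in> V1" using \<open>z t \<in> V1\<close> sV by (simp add: subspace_diff)
        then have "t *\<^sub>R y \<in> V1" by (simp add: z_def)
        then have "(1/t) *\<^sub>R (t *\<^sub>R y) \<in> V1" using sV by (metis subspace_scale)
        then show False using that yV1 by simp
      qed
      have "\<forall>t\<in>{0<..<1::real}. \<exists>V. V \<in> F - {V1} \<and> z t \<in> V"
        using zK znot less.prems(5) by blast
      then obtain h where h: "\<And>t. t \<in> {0<..<1::real} \<Longrightarrow> h t \<in> F - {V1} \<and> z t \<in> h t"
        by metis
      have "\<not> inj_on h {0<..<1::real}"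
      proof
        assume "inj_on h {0<..<1::real}"
        moreover have "finite (h ` {0<..<1::real})"
          using h less.prems(1) by (metis (no_types, lifting) Diff_subset finite_subset image_subsetI)
        ultimately have "finite {0<..<1::real}" using finite_imageD by blast
        then show False using infinite_Ioo[of "0::real" 1] by simp
      qed
      then obtain t u where tu: "t \<in> {0<..<1}" "u \<in> {0<..<1}" "t \<noteq> u" "h t = h u"
        unfolding inj_on_def by blast
      define V where "V = h t"
      have VF: "V \<in> F - {V1}" using h tu by (simp add: V_def)
      have sV: "subspace V" using VF less.prems(2) by blast
      have zt: "z t \<in> V" and zu: "z u \<in> V" using h tu by (auto simp: V_def)
      have "z t - z u = (t - u) *\<^sub>R (y - x)"
        by (simp add: z_def algebra_simps)
      then have "(t - u) *\<^sub>R (y - x) \<in> V" using zt zu sV by (metis subspace_diff)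
      then have "(1/(t-u)) *\<^sub>R ((t - u) *\<^sub>R (y - x)) \<in> V" using sV by (metis subspace_scale)
      then have yx: "y - x \<in> V" using tu by simp
      have "z t - t *\<^sub>R (y - x) = x" by (simp add: z_def algebra_simps)
      moreover have "z t - t *\<^sub>R (y - x) \<in> V" using zt yx sV by (simp add: subspace_scale subspace_diff)
      ultimately have "x \<in> V" by simp
      then show ?thesis using x VF by blast
    qed
  qed
qed

definition unW :: "real ^ ('n::finite + 'k::finite \<times> 'n option) \<Rightarrow> 'k \<Rightarrow> 'n \<Rightarrow> real" where
  "unW x i j = x $ Inr (i, Some j)"
definition unb :: "real ^ ('n::finite + 'k::finite \<times> 'n option) \<Rightarrow> 'n \<Rightarrow> real" where
  "unb x j = x $ Inl j"
definition unc :: "real ^ ('n::finite + 'k::finite \<times> 'n option) \<Rightarrow> 'k \<Rightarrow> real" where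
  "unc x i = x $ Inr (i, None)"

lemma param_un:
  fixes x :: "real ^ ('n::finite + 'k::finite \<times> 'n option)"
  shows "param (unW x) (unb x) (unc x) = x"
  unfolding vec_eq_iff
proof
  fix col :: "'n + 'k \<times> 'n option"
  show "param (unW x) (unb x) (unc x) $ col = x $ col"
    by (cases col) (auto simp: param_def unW_def unb_def unc_def split: option.split)
qed

lemma sv_add: "sv (x + y) i v = sv x i v + sv y i v"
  by (simp add: sv_def sum.distrib)
lemma sv_zero: "sv 0 i v = 0"
  by (simp add: sv_def)
lemma sv_scale: "sv (c *\<^sub>R x) i v = c * sv x i v"
  by (simp add: sv_def sum_distrib_left algebra_simps)

lemma trop_in:
  fixes W :: "'k::finite \<Rightarrow> 'n::finite \<Rightarrow> real"
  shows "rbm_trop W b c \<in> tropical_RBM TYPE('k)"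
  unfolding tropical_RBM_def by (rule range_eqI[of _ _ "(W, b, c)"]) simp

lemma zero_in: "(0 :: real ^ ('n::finite set)) \<in> tropical_RBM TYPE('k::finite)"
proof -
  have "param (\<lambda>(_::'k) (_::'n). 0::real) (\<lambda>_. 0) (\<lambda>_. 0) = 0"
    unfolding vec_eq_iff
  proof
    fix col :: "'n + 'k \<times> 'n option"
    show "param (\<lambda>(_::'k) (_::'n). 0::real) (\<lambda>_. 0) (\<lambda>_. 0) $ col = 0 $ col"
      by (cases col) (auto simp: param_def split: option.split)
  qed
  then have "rbm_trop (\<lambda>(_::'k) (_::'n). 0::real) (\<lambda>_. 0) (\<lambda>_. 0) = 0"
    by (simp add: trop_eq)
  then show ?thesis using trop_in by metis
qed

lemma lower:
  fixes C :: "'k::finite \<Rightarrow> 'n::finite set set"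
  assumes sl: "\<forall>i. slicing (C i)"
  shows "\<exists>K :: (real ^ ('n set)) set. polyhedral_cone K \<and> K \<subseteq> tropical_RBM TYPE('k) \<and> dim K = rank (rbm_matrix C)"
proof -
  let ?M = "rbm_matrix C"
  have "\<forall>i. \<exists>p::('n \<Rightarrow> real) \<times> real. (\<forall>v. (v \<in> C i \<longrightarrow> snd p + sum (fst p) v > 0) \<and> (v \<notin> C i \<longrightarrow> snd p + sum (fst p) v < 0))"
    using sl unfolding slicing_def by fastforce
  then obtain f :: "'k \<Rightarrow> ('n \<Rightarrow> real) \<times> real" where f: "\<forall>i. (\<forall>v. (v \<in> C i \<longrightarrow> snd (f i) + sum (fst (f i)) v > 0) \<and> (v \<notin> C i \<longrightarrow> snd (f i) + sum (fst (f i)) v < 0))"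
    by (rule choice[THEN exE]) blast
  define a where "a i = fst (f i)" for i
  define a0 where "a0 i = snd (f i)" for i
  have aa: "\<And>i v. (v \<in> C i \<longrightarrow> a0 i + sum (a i) v > 0) \<and> (v \<notin> C i \<longrightarrow> a0 i + sum (a i) v < 0)"
    using f by (simp add: a_def a0_def)
  define x0 where "x0 = param a (\<lambda>_. 0) a0"
  have s0: "sv x0 i v = a0 i + sum (a i) v" for i v by (simp add: x0_def sv_def param_def)
  define P where "P = {x. \<forall>i v. (v \<in> C i \<longrightarrow> sv x i v > 0) \<and> (v \<notin> C i \<longrightarrow> sv x i v < 0)}"
  have x0P: "x0 \<in> P" using aa by (simp add: P_def s0)
  have s0ne: "sv x0 i v \<noteq> 0" for i v using aa[of v i] by (auto simp: s0)
  have PIM: "?M *v x \<in> tropical_RBM TYPE('k)" if "x \<in> P" for x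
  proof -
    have "(\<lambda>i. {v. sv x i v > 0}) = C" using that unfolding P_def fun_eq_iff by (auto, meson less_asym)
    then have "rbm_trop (unW x) (unb x) (unc x) = ?M *v x"
      using trop_eq[of "unW x" "unb x" "unc x"] by (simp add: param_un)
    then show ?thesis using trop_in by metis
  qed
  define T where "T = (\<lambda>x. ?M *v x) ` insert 0 P"
  have TIM: "T \<subseteq> tropical_RBM TYPE('k)" using PIM zero_in by (auto simp: T_def)
  have ccP: "convex_cone (insert 0 P)"
    unfolding convex_cone_iff
  proof (intro conjI ballI allI impI)
    show "0 \<in> insert 0 P" by simp
  next
    fix x y assume "x \<in> insert 0 P" "y \<in> insert 0 P"
    then show "x + y \<in> insert 0 P"
      by (auto simp: P_def sv_add sv_zero) (auto intro!: add_pos_pos add_neg_neg)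
  next
    fix x and c :: real assume "x \<in> insert 0 P" "0 \<le> c"
    then show "c *\<^sub>R x \<in> insert 0 P"
      by (cases "c = 0") (auto simp: P_def sv_scale mult_pos_neg)
  qed
  have ccT: "convex_cone T" unfolding T_def
    by (rule convex_cone_linear_image) (simp add: ccP)
  define lam where "lam x = 1 + (\<Sum>i\<in>UNIV. \<Sum>v\<in>UNIV. \<bar>sv x i v\<bar> / \<bar>sv x0 i v\<bar>)" for x
  have lamP: "lam x *\<^sub>R x0 + x \<in> P" for x
  proof -
    have key: "\<bar>sv x i v\<bar> < lam x * \<bar>sv x0 i v\<bar>" for i v
    proof -
      have "\<bar>sv x i v\<bar> / \<bar>sv x0 i v\<bar> \<le> (\<Sum>v\<in>UNIV. \<bar>sv x i v\<bar> / \<bar>sv x0 i v\<bar>)"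
        by (rule member_le_sum) auto
      also have "\<dots> \<le> (\<Sum>i\<in>UNIV. \<Sum>v\<in>UNIV. \<bar>sv x i v\<bar> / \<bar>sv x0 i v\<bar>)"
        by (rule member_le_sum[where f = "\<lambda>i. \<Sum>v\<in>UNIV. \<bar>sv x i v\<bar> / \<bar>sv x0 i v\<bar>"]) (auto intro: sum_nonneg)
      finally have "\<bar>sv x i v\<bar> / \<bar>sv x0 i v\<bar> + 1 \<le> lam x" by (simp add: lam_def)
      then have "(\<bar>sv x i v\<bar> / \<bar>sv x0 i v\<bar> + 1) * \<bar>sv x0 i v\<bar> \<le> lam x * \<bar>sv x0 i v\<bar>"
        by (rule mult_right_mono) simp
      moreover have "(\<bar>sv x i v\<bar> / \<bar>sv x0 i v\<bar> + 1) * \<bar>sv x0 i v\<bar> = \<bar>sv x i v\<bar> + \<bar>sv x0 i v\<bar>"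
        using s0ne[of i v] by (simp add: field_simps)
      ultimately show ?thesis using s0ne[of i v] by (smt (verit) zero_less_abs_iff)
    qed
    show ?thesis unfolding P_def
    proof (intro CollectI allI conjI impI)
      fix i v assume "v \<in> C i"
      then have "sv x0 i v > 0" using x0P by (simp add: P_def)
      then show "sv (lam x *\<^sub>R x0 + x) i v > 0" using key[of i v]
        by (simp add: sv_add sv_scale abs_if split: if_splits)
    next
      fix i v assume "v \<notin> C i"
      then have "sv x0 i v < 0" using x0P by (simp add: P_def)
      then show "sv (lam x *\<^sub>R x0 + x) i v < 0" using key[of i v]
        by (simp add: sv_add sv_scale abs_if split: if_splits)
    qed
  qed
  define G where "G = (\<lambda>x. ?M *v x) ` insert x0 ((\<lambda>col. lam (axis col 1) *\<^sub>R x0 + axis col 1) ` UNIV)"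
  have fG: "finite G" by (simp add: G_def)
  have GT: "G \<subseteq> T" using x0P lamP by (auto simp: G_def T_def)
  define K where "K = convex_cone hull G"
  have KT: "K \<subseteq> T" unfolding K_def using GT ccT by (rule hull_minimal)
  have pK: "polyhedral_cone K"
    unfolding polyhedral_cone_def K_def
    using polyhedron_convex_cone_hull[OF fG] convex_cone_hull_mul by (auto simp: cone_def)
  have "range (\<lambda>x. ?M *v x) \<subseteq> span (columns ?M)"
    using matrix_vector_mult_in_columnspace by blast
  also have "span (columns ?M) \<subseteq> span G"
  proof (rule span_minimal)
    show "subspace (span G)" by simp
    show "columns ?M \<subseteq> span G"
    proof
      fix y assume "y \<in> columns ?M"
      then obtain col where y: "y = ?M *v axis col 1" by (auto simp: columns_image_basis)
      have e1: "?M *v (lam (axis col 1) *\<^sub>R x0 + axis col 1) \<in> span G"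
        by (rule span_base) (auto simp: G_def)
      have e2: "?M *v x0 \<in> span G" by (rule span_base) (auto simp: G_def)
      have "?M *v (lam (axis col 1) *\<^sub>R x0 + axis col 1) - lam (axis col 1) *\<^sub>R (?M *v x0) \<in> span G"
        using e1 e2 by (intro span_diff span_scale)
      then show "y \<in> span G" by (simp add: y algebra_simps)
    qed
  qed
  also have "span G \<subseteq> span K" unfolding K_def by (rule span_mono) (rule hull_subset)
  finally have "dim (range (\<lambda>x. ?M *v x)) \<le> dim K" by (metis dim_span dim_subset)
  moreover have "dim K \<le> dim (range (\<lambda>x. ?M *v x))"
  proof (rule dim_subset)
    have "T \<subseteq> range (\<lambda>x. ?M *v x)" unfolding T_def by blast
    then show "K \<subseteq> range (\<lambda>x. ?M *v x)" using KT by blast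
  qed
  ultimately have "dim K = rank ?M" by (simp add: rank_dim_range)
  then show ?thesis using pK KT TIM by blast
qed

lemma image_cover:
  fixes p :: "real ^ ('n::finite set)"
  assumes "p \<in> tropical_RBM TYPE('k::finite)"
  shows "\<exists>C :: 'k \<Rightarrow> 'n set set. (\<forall>i. slicing (C i)) \<and> p \<in> range (\<lambda>x. rbm_matrix C *v x)"
proof -
  obtain W :: "'k \<Rightarrow> 'n \<Rightarrow> real" and b c where p: "p = rbm_trop W b c"
    using assms unfolding tropical_RBM_def by auto
  let ?x = "param W b c"
  have "\<forall>i. slicing {v. sv ?x i v > 0}"
    unfolding sv_def by (intro allI slicing_pos)
  moreover have "p \<in> range (\<lambda>x. rbm_matrix (\<lambda>i. {v. sv ?x i v > 0}) *v x)"
    unfolding p trop_eq by (rule rangeI)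
  ultimately show ?thesis by (intro exI[of _ "\<lambda>i. {v. sv ?x i v > 0}"] conjI)
qed

theorem theorem4p2:
  "cone_dimension (tropical_RBM TYPE('k::finite) :: (real ^ ('n::finite set)) set)
     = Max {rank (rbm_matrix C) | C :: 'k \<Rightarrow> 'n set set. \<forall>i. slicing (C i)}"
proof -
  define SL where "SL = {dim K | K :: (real ^ ('n set)) set. polyhedral_cone K \<and> K \<subseteq> tropical_RBM TYPE('k)}"
  define SR where "SR = {rank (rbm_matrix C) | C :: 'k \<Rightarrow> 'n set set. \<forall>i. slicing (C i)}"
  have finR: "finite SR"
  proof -
    have "SR = (\<lambda>C. rank (rbm_matrix C)) ` {C :: 'k \<Rightarrow> 'n set set. \<forall>i. slicing (C i)}"
      by (auto simp: SR_def)
    moreover have "finite {C :: 'k \<Rightarrow> 'n set set. \<forall>i. slicing (C i)}"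
      by (rule finite_subset[OF subset_UNIV finite_class.finite_UNIV])
    ultimately show ?thesis by (simp only: finite_imageI)
  qed
  have slU: "slicing (UNIV :: 'n set set)"
    using slicing_pos[of 1 "\<lambda>_::'n. 0"] by simp
  have "rank (rbm_matrix (\<lambda>_::'k. UNIV :: 'n set set)) \<in> SR"
    unfolding SR_def using slU by (intro CollectI exI[of _ "\<lambda>_::'k. UNIV :: 'n set set"]) simp
  then have neR: "SR \<noteq> {}" by blast
  have finL: "finite SL"
  proof (rule finite_subset)
    show "SL \<subseteq> {..CARD('n set)}"
    proof
      fix d assume "d \<in> SL"
      then obtain K :: "(real ^ ('n set)) set" where "d = dim K" unfolding SL_def by blast
      then show "d \<in> {..CARD('n set)}" using dim_subset_UNIV_cart[of K] by simp
    qed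
  qed simp
  have neL: "SL \<noteq> {}"
    using lower[of "\<lambda>_::'k. UNIV :: 'n set set"] slU unfolding SL_def by blast
  have "Max SL \<le> Max SR"
  proof (subst Max_le_iff[OF finL neL], intro ballI)
    fix d assume "d \<in> SL"
    then obtain K :: "(real ^ ('n set)) set" where K: "d = dim K" "polyhedral_cone K" "K \<subseteq> tropical_RBM TYPE('k)"
      unfolding SL_def by blast
    show "d \<le> Max SR"
    proof (cases "K = {}")
      case True then show ?thesis using K by simp
    next
      case False
      define F where "F = (\<lambda>C. range (\<lambda>x. rbm_matrix C *v x)) ` {C :: 'k \<Rightarrow> 'n set set. \<forall>i. slicing (C i)}"
      have "finite {C :: 'k \<Rightarrow> 'n set set. \<forall>i. slicing (C i)}"
        by (rule finite_subset[OF subset_UNIV finite_class.finite_UNIV])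
      then have "finite F" unfolding F_def by (rule finite_imageI)
      moreover have "\<forall>V\<in>F. subspace V"
        unfolding F_def using linear_subspace_image[OF matrix_vector_mul_linear subspace_UNIV] by blast
      moreover have "convex K" using K(2) by (simp add: polyhedral_cone_def polyhedron_imp_convex)
      moreover have "K \<subseteq> \<Union>F"
      proof
        fix p assume "p \<in> K"
        then have "p \<in> tropical_RBM TYPE('k)" using K by blast
        from image_cover[OF this] obtain C :: "'k \<Rightarrow> 'n set set" where
          C: "\<forall>i. slicing (C i)" "p \<in> range (\<lambda>x. rbm_matrix C *v x)" by blast
        have "range (\<lambda>x. rbm_matrix C *v x) \<in> F" unfolding F_def using C(1) by blast
        then show "p \<in> \<Union>F" using C(2) by blast
      qed
      ultimately obtain V where V: "V \<in> F" "K \<subseteq> V"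
        using convex_in_union_subspaces[of F K] False by blast
      then obtain C :: "'k \<Rightarrow> 'n set set" where C: "\<forall>i. slicing (C i)" "V = range (\<lambda>x. rbm_matrix C *v x)"
        unfolding F_def by blast
      have "d \<le> dim V" using K V by (simp add: dim_subset)
      also have "\<dots> = rank (rbm_matrix C)" using C by (simp add: rank_dim_range)
      also have "\<dots> \<le> Max SR" using C finR by (intro Max_ge) (auto simp: SR_def)
      finally show ?thesis .
    qed
  qed
  moreover have "Max SR \<le> Max SL"
  proof (subst Max_le_iff[OF finR neR], intro ballI)
    fix r assume "r \<in> SR"
    then obtain C :: "'k \<Rightarrow> 'n set set" where C: "\<forall>i. slicing (C i)" "r = rank (rbm_matrix C)"
      unfolding SR_def by blast
    from lower[OF C(1)] obtain K :: "(real ^ ('n set)) set" where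
      K: "polyhedral_cone K" "K \<subseteq> tropical_RBM TYPE('k)" "dim K = rank (rbm_matrix C)" by blast
    have "r = dim K" using K(3) C(2) by simp
    then have "r \<in> SL" unfolding SL_def using K(1,2) by blast
    then show "r \<le> Max SL" using finL by (rule Max_ge[rotated])
  qed
  ultimately have "Max SL = Max SR" by simp
  then show ?thesis by (simp add: cone_dimension_def SL_def SR_def)
qed

end
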